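(* Let $G$ be one of $\mathrm{GL}_n$, $\mathrm{SO}_{2n+1}$, $\mathrm{SO}_{2n}$, $\mathrm{Sp}_{2n}$ (excluding $\mathrm{SO}_{2n+1}$ when $p=2$) with natural module $V$, let $P$ be a proper parabolic subgroup with unipotent radical $Q$ and natural flag $0=W_0<W_1<\dots<W_\ell=V$. Let $g\in Q$, $r\ge1$, and let $V_r$ be a subspace spanned by $r$ Jordan chains of $g$ belonging to $r$ distinct Jordan blocks. Then $\dim V_r\le\sum_{i=1}^\ell\min\{r,\dim W_i/W_{i-1}\}$, with equality if and only if $\dim(V_r\cap W_j)=\sum_{i=1}^j\min\{r,\dim W_i/W_{i-1}\}$ for all $j\ge1$. In particular, if $\lambda_1(g)\ge\lambda_2(g)\ge\cdots$ are the Jordan block sizes of $g$, then $\sum_{i=1}^r\lambda_i(g)\le\sum_{i=1}^\ell\min\{r,\dim W_i/W_{i-1}\}$ for all $r\ge1$.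
   Context: Setup: a subspace $W$ of the natural module is totally singular if the quadratic form (hence the bilinear form $\beta$) vanishes on it; for $\mathrm{GL}_n$ every subspace counts as totally singular. A flag $W_0\le\dots\le W_\ell$ is totally singular if each $W_i$ is totally singular or equals $W^\perp$ for some totally singular $W$. Write a Levi factor of $P$ as $\mathrm{GL}_{n_1}\cdots\mathrm{GL}_{n_s}\mathrm{Cl}_m$ ($m\ge 0$; $\mathrm{Cl}_m$ a classical group of the same type as $G$ of rank $m$, absent for $\mathrm{GL}_n$ where $m=0$). A natural flag for $P$ is a totally singular flag of length $\ell$ whose stabilizer is $P$, where $\ell=s$ if $G=\mathrm{GL}_n$, $\ell=2s$ if $m=0$ and $G\in\{\mathrm{SO}_{2n},\mathrm{Sp}_{2n}\}$, and $\ell=2s+1$ if $m\ge1$ or $G=\mathrm{SO}_{2n+1}$. The unipotent radical $Q$ is the set of elements of $P$ acting trivially on every factor $W_i/W_{i-1}$. A Jordan chain of length $x$ for $g$ is $v_1,\dots,v_x$ with $(g-1)v_1=0$, $(g-1)v_i=v_{i-1}$. *)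

theory Defs
  imports "HOL-Analysis.Analysis"
begin

definition jordan_chain :: "'a::field^'n^'n \<Rightarrow> ('a^'n) list \<Rightarrow> bool" where
  "jordan_chain g vs \<longleftrightarrow>
     (\<forall>i < length vs. g *v (vs ! i) - vs ! i = (if i = 0 then 0 else vs ! (i - 1)))"

text \<open>A Jordan decomposition of g: a list of nonempty Jordan chains (the Jordan
  blocks) whose concatenation is a basis of V.\<close>
definition jordan_decomp :: "'a::field^'n^'n \<Rightarrow> ('a^'n) list list \<Rightarrow> bool" where
  "jordan_decomp g bs \<longleftrightarrow>
     (\<forall>b \<in> set bs. b \<noteq> [] \<and> jordan_chain g b) \<and>
     distinct (concat bs) \<and>
     vec.independent (set (concat bs)) \<and>
     vec.span (set (concat bs)) = UNIV"

text \<open>Jordan block sizes lambda_1 >= lambda_2 >= ... (0-indexed here), padded by zeros.\<close>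
definition jordan_sizes :: "('a^'n) list list \<Rightarrow> nat \<Rightarrow> nat" where
  "jordan_sizes bs i = (let l = rev (sort (map length bs)) in if i < length l then l ! i else 0)"

definition is_flag :: "nat \<Rightarrow> (nat \<Rightarrow> ('a::field^'n) set) \<Rightarrow> bool" where
  "is_flag l W \<longleftrightarrow> (\<forall>i \<le> l. vec.subspace (W i)) \<and> W 0 = {0} \<and> W l = UNIV \<and>
     (\<forall>i \<in> {1..l}. W (i - 1) \<subset> W i)"

text \<open>g lies in the unipotent radical of the flag stabilizer: g is invertible, and
  acts trivially on every factor W_i/W_(i-1).\<close>
definition in_unipotent_radical :: "'a::field^'n^'n \<Rightarrow> nat \<Rightarrow> (nat \<Rightarrow> ('a^'n) set) \<Rightarrow> bool" where
  "in_unipotent_radical g l W \<longleftrightarrow> invertible g \<and>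
     (\<forall>i \<in> {1..l}. \<forall>v \<in> W i. g *v v \<in> W i \<and> g *v v - v \<in> W (i - 1))"

definition flag_bound :: "(nat \<Rightarrow> ('a::field^'n) set) \<Rightarrow> nat \<Rightarrow> nat \<Rightarrow> nat" where
  "flag_bound W r j = (\<Sum>i = 1..j. min r (vec.dim (W i) - vec.dim (W (i - 1))))"

text \<open>Vr is spanned by r Jordan chains cs!0..cs!(r-1) of g, the i-th one lying in the
  Jordan block bs!(blk i) of the Jordan decomposition bs, the blocks blk i being distinct.\<close>
definition chain_span :: "'a::field^'n^'n \<Rightarrow> ('a^'n) list list \<Rightarrow> nat \<Rightarrow> ('a^'n) list list
    \<Rightarrow> (nat \<Rightarrow> nat) \<Rightarrow> ('a^'n) set \<Rightarrow> bool" where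
  "chain_span g bs r cs blk Vr \<longleftrightarrow>
     jordan_decomp g bs \<and> length cs = r \<and> inj_on blk {..<r} \<and>
     (\<forall>i < r. blk i < length bs \<and> jordan_chain g (cs ! i) \<and>
              set (cs ! i) \<subseteq> vec.span (set (bs ! blk i))) \<and>
     Vr = vec.span (\<Union>i < r. set (cs ! i))"

end

theory Submission imports Defs "HOL-Combinatorics.List_Permutation" begin

lemma rank_nullity_vec:
  fixes f :: "'a::field^'n \<Rightarrow> 'a^'n"
  assumes lf: "Vector_Spaces.linear (*s) (*s) f" and S: "vec.subspace S"
  shows "vec.dim S = vec.dim (f ` S) + vec.dim {x\<in>S. f x = 0}"
proof -
  interpret lf: Vector_Spaces.linear "(*s)" "(*s)" f by (rule lf)
  define K where "K = {x\<in>S. f x = 0}"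
  have KS: "K \<subseteq> S" unfolding K_def by auto
  have Ksub: "vec.subspace K"
    using S unfolding K_def vec.subspace_def by (auto simp: lf.add lf.scale)
  obtain B where B: "B \<subseteq> K" "vec.independent B" "K \<subseteq> vec.span B" "card B = vec.dim K"
    using vec.basis_exists by blast
  obtain C where C: "B \<subseteq> C" "C \<subseteq> S" "vec.independent C" "S \<subseteq> vec.span C"
    using vec.maximal_independent_subset_extend[of B S] B KS by blast
  have finC: "finite C" using C vec.finiteI_independent by blast
  have spanC: "vec.span C \<subseteq> S" using C S vec.span_minimal by blast
  have dimS: "vec.dim S = card C"
  proof -
    have "vec.dim C \<le> vec.dim S" using C vec.dim_subset by blast
    moreover have "vec.dim S \<le> vec.dim (vec.span C)" using C vec.dim_subset by blast
    ultimately show ?thesis using vec.dim_eq_card_independent[OF C(3)] by simp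
  qed
  define D where "D = C - B"
  have cardC: "card C = card D + card B"
    unfolding D_def using finC C(1) by (metis card_Diff_subset card_mono finite_subset le_add_diff_inverse2)
  have indD: "vec.independent D" using C(3) vec.independent_mono D_def by blast
  have cardD: "vec.dim (vec.span D) = card D" using indD vec.dim_span_eq_card_independent by blast
  have cardB: "vec.dim (vec.span B) = card B" using B(2) vec.dim_span_eq_card_independent by blast
  have int0: "vec.span D \<inter> vec.span B \<subseteq> {0}"
  proof -
    have si: "vec.dim {x + y |x y. x \<in> vec.span D \<and> y \<in> vec.span B} + vec.dim (vec.span D \<inter> vec.span B)
        = vec.dim (vec.span D) + vec.dim (vec.span B)"
      by (rule vec.dim_sums_Int) auto
    have "{x + y |x y. x \<in> vec.span D \<and> y \<in> vec.span B} = vec.span (D \<union> B)"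
      by (simp add: vec.span_Un)
    also have "D \<union> B = C" using C(1) D_def by auto
    finally have "vec.dim {x + y |x y. x \<in> vec.span D \<and> y \<in> vec.span B} = card C"
      using vec.dim_span_eq_card_independent[OF C(3)] by simp
    with si cardC cardD cardB have "vec.dim (vec.span D \<inter> vec.span B) = 0" by simp
    then show ?thesis by (simp add: vec.dim_eq_0)
  qed
  have inj: "inj_on f (vec.span D)"
  proof (rule inj_onI)
    fix x y assume xy: "x \<in> vec.span D" "y \<in> vec.span D" "f x = f y"
    have d: "x - y \<in> vec.span D" using xy vec.span_diff by blast
    have "vec.span D \<subseteq> S" using spanC D_def vec.span_mono by blast
    then have "x - y \<in> K" using d xy unfolding K_def by (auto simp: lf.diff)
    then have "x - y \<in> vec.span B" using B(3) by blast
    then have "x - y = 0" using d int0 by blast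
    then show "x = y" by simp
  qed
  have dimfD: "vec.dim (f ` D) = card D"
    using vec.dim_image_eq[OF lf, of D] inj indD vec.dim_eq_card_independent by simp
  have "vec.dim (f ` S) = vec.dim (f ` D)"
  proof (rule antisym)
    have "D \<subseteq> S" using C D_def by auto
    then show "vec.dim (f ` D) \<le> vec.dim (f ` S)" by (intro vec.dim_subset) auto
    have spB: "vec.span B \<subseteq> K" using B Ksub vec.span_minimal by blast
    have "f ` S \<subseteq> vec.span (f ` D)"
    proof
      fix z assume "z \<in> f ` S"
      then obtain x where x: "x \<in> S" "z = f x" by blast
      then have "x \<in> vec.span (D \<union> B)" using C D_def by (metis Un_Diff_cancel2 sup.absorb_iff1 subsetD)
      then obtain d b where db: "x = d + b" "d \<in> vec.span D" "b \<in> vec.span B"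
        by (auto simp: vec.span_Un)
      have "f b = 0" using db spB K_def by auto
      then have "z = f d" using x db by (simp add: lf.add)
      then show "z \<in> vec.span (f ` D)" using db lf.span_image by auto
    qed
    then have "vec.dim (f ` S) \<le> vec.dim (vec.span (f ` D))" by (rule vec.dim_subset)
    then show "vec.dim (f ` S) \<le> vec.dim (f ` D)" by simp
  qed
  then show ?thesis using dimS cardC dimfD B(4) K_def by simp
qed

lemma core:
  fixes N :: "'a::field^'n \<Rightarrow> 'a^'n" and W :: "nat \<Rightarrow> ('a^'n) set"
  assumes lf: "Vector_Spaces.linear (*s) (*s) N"
   and U: "vec.subspace U" "N ` U \<subseteq> U" and kr: "vec.dim {x\<in>U. N x = 0} \<le> r"
   and Wsub: "\<forall>i\<le>l. vec.subspace (W i)" and W0: "W 0 = {0}" and Wl: "W l = UNIV"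
   and Wmono: "\<forall>i\<in>{1..l}. W (i-1) \<subseteq> W i"
   and NW: "\<forall>i\<in>{1..l}. \<forall>v\<in>W i. N v \<in> W (i-1)"
  shows "vec.dim U \<le> flag_bound W r l \<and> (vec.dim U = flag_bound W r l \<longleftrightarrow>
     (\<forall>j\<in>{1..l}. vec.dim (U \<inter> W j) = flag_bound W r j))"
proof -
  define F where "F j = U \<inter> W j" for j
  define inc where "inc j = vec.dim (F j) - vec.dim (F (j-1))" for j
  define b where "b j = min r (vec.dim (W j) - vec.dim (W (j - 1)))" for j
  have Fsub: "vec.subspace (F j)" if "j \<le> l" for j
    using that Wsub U unfolding F_def by (simp add: vec.subspace_inter)
  have Fmono: "vec.dim (F (j-1)) \<le> vec.dim (F j)" if "j \<in> {1..l}" for j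
    using that Wmono unfolding F_def by (intro vec.dim_subset) auto
  have step1: "vec.dim (F j) \<le> vec.dim (F (j-1)) + r" if j: "j \<in> {1..l}" for j
  proof -
    have "vec.dim (F j) = vec.dim (N ` F j) + vec.dim {x\<in>F j. N x = 0}"
      using rank_nullity_vec[OF lf Fsub] j by simp
    moreover have "vec.dim (N ` F j) \<le> vec.dim (F (j-1))"
      using U(2) NW j unfolding F_def by (intro vec.dim_subset) auto
    moreover have "vec.dim {x\<in>F j. N x = 0} \<le> vec.dim {x\<in>U. N x = 0}"
      unfolding F_def by (intro vec.dim_subset) auto
    ultimately show ?thesis using kr by linarith
  qed
  have step2: "vec.dim (F j) + vec.dim (W (j-1)) \<le> vec.dim (W j) + vec.dim (F (j-1))"
    if j: "j \<in> {1..l}" for j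
  proof -
    have si: "vec.dim {x + y |x y. x \<in> F j \<and> y \<in> W (j-1)} + vec.dim (F j \<inter> W (j-1))
        = vec.dim (F j) + vec.dim (W (j-1))"
      using j Fsub Wsub by (intro vec.dim_sums_Int) auto
    have e: "F j \<inter> W (j-1) = F (j-1)" using Wmono j unfolding F_def by auto
    have le: "vec.dim {x + y |x y. x \<in> F j \<and> y \<in> W (j-1)} \<le> vec.dim (W j)"
    proof (rule vec.dim_subset, safe)
      fix x y assume "x \<in> F j" "y \<in> W (j-1)"
      then have "x \<in> W j" "y \<in> W j" using Wmono j unfolding F_def by auto
      then show "x + y \<in> W j" using Wsub j vec.subspace_add by auto
    qed
    show ?thesis using si le unfolding e by linarith
  qed
  have incb: "inc j \<le> b j" if j: "j \<in> {1..l}" for j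
    using step1[OF j] step2[OF j] Fmono[OF j] unfolding inc_def b_def by auto
  have Fsum: "vec.dim (F j) = (\<Sum>i=1..j. inc i)" if "j \<le> l" for j
    using that
  proof (induction j)
    case 0
    then show ?case unfolding F_def using W0 by (simp add: Int_absorb1 vec.subspace_0 U(1))
  next
    case (Suc j)
    have "Suc j \<in> {1..l}" using Suc by auto
    then have "vec.dim (F (Suc j)) = vec.dim (F j) + inc (Suc j)"
      using Fmono[of "Suc j"] unfolding inc_def by auto
    then show ?case using Suc by simp
  qed
  have fb: "flag_bound W r j = (\<Sum>i=1..j. b i)" for j
    unfolding flag_bound_def b_def by simp
  have FU: "F l = U" unfolding F_def using Wl by simp
  have le: "(\<Sum>i=1..j. inc i) \<le> (\<Sum>i=1..j. b i)" if "j \<le> l" for j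
    using that incb by (intro sum_mono) auto
  have eqv: "(\<Sum>i=1..l. inc i) = (\<Sum>i=1..l. b i) \<longleftrightarrow> (\<forall>j\<in>{1..l}. inc j = b j)"
  proof
    assume eq: "(\<Sum>i=1..l. inc i) = (\<Sum>i=1..l. b i)"
    show "\<forall>j\<in>{1..l}. inc j = b j"
    proof (rule ccontr)
      assume "\<not> (\<forall>j\<in>{1..l}. inc j = b j)"
      then obtain j where "j \<in> {1..l}" "inc j < b j" using incb by force
      then have "(\<Sum>i=1..l. inc i) < (\<Sum>i=1..l. b i)"
        using incb by (intro sum_strict_mono_ex1) auto
      then show False using eq by simp
    qed
  qed (simp)
  show ?thesis
  proof
    show "vec.dim U \<le> flag_bound W r l" using Fsum[of l] FU fb le[of l] by simp
    show "(vec.dim U = flag_bound W r l) = (\<forall>j\<in>{1..l}. vec.dim (U \<inter> W j) = flag_bound W r j)"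
    proof
      assume "vec.dim U = flag_bound W r l"
      then have "\<forall>j\<in>{1..l}. inc j = b j" using eqv Fsum[of l] FU fb by simp
      then show "\<forall>j\<in>{1..l}. vec.dim (U \<inter> W j) = flag_bound W r j"
        using Fsum fb unfolding F_def by (auto intro!: sum.cong)
    next
      assume A: "\<forall>j\<in>{1..l}. vec.dim (U \<inter> W j) = flag_bound W r j"
      then show "vec.dim U = flag_bound W r l"
      proof (cases "l = 0")
        case True
        then show ?thesis using Fsum[of l] FU fb by simp
      next
        case False
        then show ?thesis using A FU F_def by (metis Suc_leI atLeastAtMost_iff le_refl neq0_conv One_nat_def)
      qed
    qed
  qed
qed


lemma linN: "Vector_Spaces.linear (*s) (*s) (\<lambda>v. (g::'a::field^'n^'n) *v v - v)"
proof -
  have "(\<lambda>v. g *v v - v) = (\<lambda>v. (g - mat 1) *v v)"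
    by (simp add: matrix_vector_mult_diff_rdistrib)
  then show ?thesis by simp
qed

lemma chains:
  fixes g :: "'a::field^'n^'n" and W :: "nat \<Rightarrow> ('a^'n) set"
  assumes flag: "is_flag l W" and gQ: "in_unipotent_radical g l W"
    and C: "finite C" "card C \<le> r" "\<forall>c\<in>C. jordan_chain g c"
    and Ud: "U = vec.span (\<Union>c\<in>C. set c)"
  shows "vec.dim U \<le> flag_bound W r l \<and> (vec.dim U = flag_bound W r l \<longleftrightarrow>
     (\<forall>j\<in>{1..l}. vec.dim (U \<inter> W j) = flag_bound W r j))"
proof -
  define N where "N = (\<lambda>v. g *v v - v)"
  have lf: "Vector_Spaces.linear (*s) (*s) N" unfolding N_def by (rule linN)
  interpret lf: Vector_Spaces.linear "(*s)" "(*s)" N by (rule lf)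
  define X where "X = (\<Union>c\<in>C. set c)"
  define T where "T = last ` (C - {[]})"
  have Nc: "N (c!i) = (if i = 0 then 0 else c!(i-1))" if "c \<in> C" "i < length c" for c i
    using C(3) that unfolding jordan_chain_def N_def by auto
  have XU: "X \<subseteq> U" unfolding Ud X_def by (rule vec.span_superset)
  have USub: "vec.subspace U" unfolding Ud by simp
  have NX: "N ` X \<subseteq> U"
  proof
    fix y assume "y \<in> N ` X"
    then obtain c i where ci: "c \<in> C" "i < length c" "y = N (c!i)" unfolding X_def
      by (auto simp: in_set_conv_nth)
    show "y \<in> U"
    proof (cases "i = 0")
      case True then show ?thesis using ci Nc USub vec.subspace_0 by auto
    next
      case False
      then have "y = c!(i-1)" using ci Nc by auto
      moreover have "c!(i-1) \<in> set c" using ci by auto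
      ultimately have "y \<in> X" using ci unfolding X_def by blast
      then show ?thesis using XU by auto
    qed
  qed
  have NU: "N ` U \<subseteq> U"
  proof -
    have "N ` U = vec.span (N ` X)" unfolding Ud X_def by (simp add: lf.span_image)
    also have "\<dots> \<subseteq> U" using NX USub vec.span_minimal by blast
    finally show ?thesis .
  qed
  have XT: "X \<subseteq> N ` U \<union> T"
  proof
    fix x assume "x \<in> X"
    then obtain c i where ci: "c \<in> C" "i < length c" "x = c!i" unfolding X_def
      by (auto simp: in_set_conv_nth)
    show "x \<in> N ` U \<union> T"
    proof (cases "i = length c - 1")
      case True
      have "c \<noteq> []" using ci by auto
      then have "x = last c" using ci True by (simp add: last_conv_nth)
      then show ?thesis using ci unfolding T_def by auto
    next
      case False
      then have "Suc i < length c" using ci by auto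
      then have "x = N (c!Suc i)" using Nc ci by auto
      have "c!Suc i \<in> set c" using \<open>Suc i < length c\<close> by auto
      then have "c!Suc i \<in> U" using XU ci unfolding X_def by blast
      then have "x \<in> N ` U" using \<open>x = N (c!Suc i)\<close> by blast
      then show ?thesis by blast
    qed
  qed
  have finT: "finite T" and cardT: "card T \<le> r"
  proof -
    show "finite T" unfolding T_def using C by auto
    have "card T \<le> card (C - {[]})" unfolding T_def by (rule card_image_le) (use C in auto)
    also have "\<dots> \<le> card C" using C by (intro card_mono) auto
    finally show "card T \<le> r" using C by linarith
  qed
  obtain B where B: "B \<subseteq> N ` U" "vec.independent B" "N ` U \<subseteq> vec.span B" "card B = vec.dim (N ` U)"
    using vec.basis_exists by blast
  have finB: "finite B" using B vec.finiteI_independent by blast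
  have "U \<subseteq> vec.span (B \<union> T)"
  proof -
    have s1: "vec.span B \<subseteq> vec.span (B \<union> T)" by (rule vec.span_mono) blast
    have s2: "T \<subseteq> vec.span (B \<union> T)" using vec.span_superset[of "B \<union> T"] by blast
    have "N ` U \<union> T \<subseteq> vec.span (B \<union> T)"
      using B(3) s1 s2 by blast
    then have "X \<subseteq> vec.span (B \<union> T)" using XT by blast
    then have "vec.span X \<subseteq> vec.span (B \<union> T)" by (rule vec.span_minimal) simp
    then show ?thesis using Ud X_def by simp
  qed
  then have "vec.dim U \<le> card (B \<union> T)" using finB finT by (intro vec.dim_le_card) auto
  also have "\<dots> \<le> card B + card T" by (rule card_Un_le)
  finally have "vec.dim U \<le> vec.dim (N ` U) + r" using B(4) cardT by linarith
  moreover have "vec.dim U = vec.dim (N ` U) + vec.dim {x\<in>U. N x = 0}"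
    by (rule rank_nullity_vec[OF lf USub])
  ultimately have kr: "vec.dim {x\<in>U. N x = 0} \<le> r" by linarith
  have NW: "\<forall>i\<in>{1..l}. \<forall>v\<in>W i. N v \<in> W (i-1)"
    using gQ unfolding in_unipotent_radical_def N_def by auto
  have Wm: "\<forall>i\<in>{1..l}. W (i-1) \<subseteq> W i" using flag unfolding is_flag_def by auto
  have f1: "\<forall>i\<le>l. vec.subspace (W i)" "W 0 = {0}" "W l = UNIV" using flag unfolding is_flag_def by auto
  show ?thesis
    by (rule core[OF lf USub NU kr f1 Wm NW])
qed


lemma part2:
  fixes g :: "'a::field^'n^'n" and W :: "nat \<Rightarrow> ('a^'n) set" and r :: nat
  assumes flag: "is_flag l W" and gQ: "in_unipotent_radical g l W"
    and jd: "jordan_decomp g bs"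
  shows "(\<Sum>i < r. jordan_sizes bs i) \<le> flag_bound W r l"
proof -
  define L where "L = rev (sort (map length bs))"
  define n where "n = length bs"
  define k where "k = min r n"
  have lenL: "length L = n" unfolding L_def n_def by simp
  have "(\<Sum>i < r. jordan_sizes bs i) = (\<Sum>i < r. if i < n then L!i else 0)"
    unfolding jordan_sizes_def Let_def L_def[symmetric] lenL by simp
  also have "\<dots> = (\<Sum>i \<in> {..<r} \<inter> {..<n}. L!i)"
    using sum.inter_restrict[of "{..<r}" "(!) L" "{..<n}"] by simp
  also have "{..<r} \<inter> {..<n} = {..<k}" unfolding k_def by auto
  finally have s1: "(\<Sum>i < r. jordan_sizes bs i) = (\<Sum>i<k. L!i)" .
  have "mset L = mset (map length bs)" unfolding L_def by simp
  then obtain f where f: "bij_betw f {..<length L} {..<length (map length bs)}"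
      "\<forall>i<length L. L ! i = (map length bs) ! (f i)"
    using permutation_Ex_bij by blast
  have fi: "\<forall>i<n. f i < n"
    using f lenL unfolding n_def bij_betw_def by auto
  have fin: "\<forall>i<n. f i < n \<and> L!i = length (bs ! f i)"
    using f lenL fi unfolding n_def by auto
  have injf: "inj_on f {..<k}"
    using f lenL unfolding k_def bij_betw_def by (auto intro: inj_on_subset)
  define S where "S = f ` {..<k}"
  have Sn: "S \<subseteq> {..<n}" using fin unfolding S_def k_def by auto
  have "(\<Sum>i<k. L!i) = (\<Sum>i<k. length (bs ! f i))"
    using fin unfolding k_def by (intro sum.cong) auto
  also have "\<dots> = (\<Sum>j\<in>S. length (bs ! j))"
    unfolding S_def using sum.reindex[OF injf, of "\<lambda>j. length (bs!j)"] by simp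
  finally have s2: "(\<Sum>i<k. L!i) = (\<Sum>j\<in>S. length (bs ! j))" .
  have jd': "\<forall>b\<in>set bs. b \<noteq> [] \<and> jordan_chain g b" "distinct (concat bs)"
     "vec.independent (set (concat bs))"
    using jd unfolding jordan_decomp_def by auto
  have dbs: "distinct bs"
  proof -
    have "removeAll [] bs = bs" using jd'(1) by (intro removeAll_id) auto
    then show ?thesis using jd'(2) distinct_concat_iff by metis
  qed
  have dj: "distinct (bs!j)" if "j < n" for j
    using jd'(2) that distinct_concat_iff[of bs] unfolding n_def by auto
  have disj: "set (bs!i) \<inter> set (bs!j) = {}" if "i < n" "j < n" "i \<noteq> j" for i j
  proof -
    have "bs!i \<noteq> bs!j" using dbs that nth_eq_iff_index_eq unfolding n_def by metis
    then show ?thesis using jd'(2) that distinct_concat_iff[of bs] unfolding n_def by auto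
  qed
  define X where "X = (\<Union>j\<in>S. set (bs!j))"
  define C where "C = (\<lambda>j. bs!j) ` S"
  have finS: "finite S" unfolding S_def by simp
  have cardS: "card S \<le> r" unfolding S_def k_def using card_image_le[of "{..<k}" f] k_def by simp
  have chC: "\<forall>c\<in>C. jordan_chain g c" using jd'(1) Sn unfolding C_def n_def by auto
  have XC: "X = (\<Union>c\<in>C. set c)" unfolding X_def C_def by auto
  have "vec.dim (vec.span X) \<le> flag_bound W r l"
    using chains[OF flag gQ _ _ chC XC[THEN arg_cong[where f=vec.span]]]
      finS cardS card_image_le[OF finS, of "\<lambda>j. bs!j"] unfolding C_def by simp
  moreover have "vec.dim (vec.span X) = card X"
  proof -
    have "X \<subseteq> set (concat bs)" using Sn unfolding X_def n_def by (force intro!: bexI[of _ "bs!_"] nth_mem)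
    then have "vec.independent X" using jd'(3) vec.independent_mono by blast
    then show ?thesis by (rule vec.dim_span_eq_card_independent)
  qed
  moreover have "card X = (\<Sum>j\<in>S. card (set (bs!j)))"
    unfolding X_def using finS disj Sn by (intro card_UN_disjoint) auto
  moreover have "(\<Sum>j\<in>S. card (set (bs!j))) = (\<Sum>j\<in>S. length (bs!j))"
    using dj Sn by (intro sum.cong) (auto simp: distinct_card)
  ultimately show ?thesis using s1 s2 by simp
qed

theorem mainTheorem6:
  fixes g :: "'a::field^'n^'n" and W :: "nat \<Rightarrow> ('a^'n) set" and l :: nat
  assumes proper: "2 \<le> l"
    and flag: "is_flag l W"
    and gQ: "in_unipotent_radical g l W"
  shows "(\<forall>bs r cs blk Vr. 1 \<le> r \<longrightarrow> chain_span g bs r cs blk Vr \<longrightarrow>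
            vec.dim Vr \<le> flag_bound W r l \<and>
            (vec.dim Vr = flag_bound W r l \<longleftrightarrow>
               (\<forall>j \<in> {1..l}. vec.dim (Vr \<inter> W j) = flag_bound W r j)))
       \<and> (\<forall>bs. jordan_decomp g bs \<longrightarrow>
            (\<forall>r \<ge> 1. (\<Sum>i < r. jordan_sizes bs i) \<le> flag_bound W r l))"
proof (intro conjI allI impI)
  fix bs r cs blk Vr
  assume "1 \<le> r" and cs: "chain_span g bs r cs blk Vr"
  have len: "length cs = r" and ch: "\<forall>i<r. jordan_chain g (cs!i)"
    and V: "Vr = vec.span (\<Union>i<r. set (cs!i))"
    using cs unfolding chain_span_def by auto
  have sc: "set cs = (\<lambda>i. cs!i) ` {..<r}" using len by (auto simp: in_set_conv_nth image_iff)
  have e: "(\<Union>i<r. set (cs!i)) = (\<Union>c\<in>set cs. set c)"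
    unfolding sc by simp
  have chC: "\<forall>c\<in>set cs. jordan_chain g c" using ch len by (auto simp: in_set_conv_nth)
  have cc: "card (set cs) \<le> r" using len card_length by metis
  have "vec.dim Vr \<le> flag_bound W r l \<and> (vec.dim Vr = flag_bound W r l \<longleftrightarrow>
     (\<forall>j\<in>{1..l}. vec.dim (Vr \<inter> W j) = flag_bound W r j))"
    by (rule chains[OF flag gQ finite_set cc chC]) (simp add: V e)
  then show "vec.dim Vr \<le> flag_bound W r l"
    "(vec.dim Vr = flag_bound W r l \<longleftrightarrow> (\<forall>j \<in> {1..l}. vec.dim (Vr \<inter> W j) = flag_bound W r j))"
    by auto
next
  fix bs and r :: nat assume "jordan_decomp g bs" "1 \<le> r"
  then show "(\<Sum>i < r. jordan_sizes bs i) \<le> flag_bound W r l"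
    using part2[OF flag gQ] by blast
qed

end
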